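(* Let $G$ and $H$ be graphs and let $f,f'\colon \varGamma(H)\to \varGamma(G)$ be properad morphisms such that the image of $f$ and the image of $f'$ are both subgraphs of $G$. If $f_0=f'_0$ as functions $\mathrm{Ed}(H)\to \mathrm{Ed}(G)$, then $f=f'$. That is, a properad map $\varGamma(H)\to\varGamma(G)$ whose image is a subgraph of $G$ is uniquely determined by its effect on edges.
   Context: A graph is a finite connected directed graph, allowed to have legs (edges attached to a vertex at only one end; the graph $\downarrow$ consisting of a single edge and no vertex is allowed), with no directed cycles, together with orderings (bijections with $\{1,\dots,k\}$) of its global inputs $\mathrm{in}(G)$ and outputs $\mathrm{out}(G)$ and of the inputs $\mathrm{in}(v)$ and outputs $\mathrm{out}(v)$ of each vertex $v\in\mathrm{Vt}(G)$; $\mathrm{Ed}(G)$ denotes its set of edges. Graph substitution $K\{L_v\}_{v}$ replaces each vertex $v$ of $K$ by a graph $L_v$ whose inputs and outputs are identified bijectively (and compatibly with colorings) with $\mathrm{in}(v)$ and $\mathrm{out}(v)$. For a graph $G$, the properad $\varGamma(G)$ has color set $\mathrm{Ed}(G)$, and its operations of biprofile $(\underline c;\underline d)$ are $\hat G$-decorated graphs: graphs $K$ with inputs $\underline c$ and outputs $\underline d$ whose edges are colored by edges of $G$, together with a function $\mathrm{Vt}(K)\to\mathrm{Vt}(G)$ compatible with the colorings; composition is graph substitution. A properad morphism $f\colon\varGamma(H)\to\varGamma(G)$ consists of a function $f_0\colon \mathrm{Ed}(H)\to\mathrm{Ed}(G)$ and an assignment $f_1$ sending each $v\in\mathrm{Vt}(H)$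 to a $\hat G$-decorated graph with inputs $f_0(\mathrm{in}(v))$ and outputs $f_0(\mathrm{out}(v))$. The image of $f$ is the $\hat G$-decorated graph $f_0H\{f_1(v)\}_{v\in\mathrm{Vt}(H)}$, obtained by relabeling the edges of $H$ via $f_0$ and substituting $f_1(v)$ at each vertex $v$; saying the image is a subgraph of $G$ means that via its decorations this graph is identified with a subgraph of $G$. *)

theory Defs
  imports Main
begin

text \<open>A graph: vertex set, edge set, for each vertex the ordered list of its inputs and
outputs, and the ordered lists of global inputs and outputs.  A list encodes a bijection
with {1..k}.\<close>

record ('v, 'e) graph =
  gV    :: "'v set"
  gE    :: "'e set"
  gin   :: "'v \<Rightarrow> 'e list"
  gout  :: "'v \<Rightarrow> 'e list"
  ginG  :: "'e list"
  goutG :: "'e list"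

definition incidence :: "('v, 'e) graph \<Rightarrow> ('v + 'e) rel" where
  "incidence G = {(Inl v, Inr e) | v e. v \<in> gV G \<and> (e \<in> set (gin G v) \<or> e \<in> set (gout G v))}"

definition vadj :: "('v, 'e) graph \<Rightarrow> 'v rel" where
  "vadj G = {(u, w). u \<in> gV G \<and> w \<in> gV G \<and> (\<exists>e. e \<in> set (gout G u) \<and> e \<in> set (gin G w))}"

definition wf_graph :: "('v, 'e) graph \<Rightarrow> bool" where
  "wf_graph G \<longleftrightarrow>
     finite (gV G) \<and> finite (gE G) \<and> (gV G \<noteq> {} \<or> gE G \<noteq> {}) \<and>
     (\<forall>v\<in>gV G. distinct (gin G v) \<and> distinct (gout G v) \<and>
                 set (gin G v) \<subseteq> gE G \<and> set (gout G v) \<subseteq> gE G) \<and>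
     distinct (ginG G) \<and> distinct (goutG G) \<and>
     set (ginG G) \<subseteq> gE G \<and> set (goutG G) \<subseteq> gE G \<and>
     \<comment> \<open>each edge has exactly one source end (a vertex output or a global input)\<close>
     (\<forall>e\<in>gE G. (if e \<in> set (ginG G) then 1 else 0) + card {v \<in> gV G. e \<in> set (gout G v)} = (1::nat)) \<and>
     \<comment> \<open>each edge has exactly one target end (a vertex input or a global output)\<close>
     (\<forall>e\<in>gE G. (if e \<in> set (goutG G) then 1 else 0) + card {v \<in> gV G. e \<in> set (gin G v)} = (1::nat)) \<and>
     \<comment> \<open>connected\<close>
     (\<forall>x \<in> Inl ` gV G \<union> Inr ` gE G. \<forall>y \<in> Inl ` gV G \<union> Inr ` gE G.
         (x, y) \<in> (incidence G \<union> (incidence G)\<inverse>)\<^sup>*) \<and>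
     \<comment> \<open>no directed cycles\<close>
     acyclic (vadj G)"

definition graph_iso :: "('v1, 'e1) graph \<Rightarrow> ('v2, 'e2) graph \<Rightarrow> ('v1 \<Rightarrow> 'v2) \<Rightarrow> ('e1 \<Rightarrow> 'e2) \<Rightarrow> bool" where
  "graph_iso G1 G2 \<alpha> \<beta> \<longleftrightarrow>
     bij_betw \<alpha> (gV G1) (gV G2) \<and> bij_betw \<beta> (gE G1) (gE G2) \<and>
     (\<forall>v\<in>gV G1. gin G2 (\<alpha> v) = map \<beta> (gin G1 v) \<and> gout G2 (\<alpha> v) = map \<beta> (gout G1 v)) \<and>
     ginG G2 = map \<beta> (ginG G1) \<and> goutG G2 = map \<beta> (goutG G1)"

text \<open>The i-th input (output) of L v is identified
with the i-th input (output) of v.  When L v is the exceptional edge (no vertices), its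
input and output edge of H get identified; hence the edges of H are quotiented by the
equivalence relation generated by these identifications.\<close>

definition collapse_rel :: "('v, 'e) graph \<Rightarrow> ('v \<Rightarrow> ('a, 'b) graph) \<Rightarrow> 'e rel" where
  "collapse_rel H L =
     (let S = {(hd (gin H v), hd (gout H v)) | v. v \<in> gV H \<and> gV (L v) = {}} in (S \<union> S\<inverse>)\<^sup>*)"

definition sub_edge :: "('v, 'e) graph \<Rightarrow> ('v \<Rightarrow> ('a, 'b) graph) \<Rightarrow> 'v \<Rightarrow> 'b \<Rightarrow> 'e set + ('v \<times> 'b)" where
  "sub_edge H L v b =
     (case map_of (zip (ginG (L v)) (gin H v)) b of
        Some e \<Rightarrow> Inl (collapse_rel H L `` {e})
      | None \<Rightarrow> (case map_of (zip (goutG (L v)) (gout H v)) b of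
                   Some e \<Rightarrow> Inl (collapse_rel H L `` {e})
                 | None \<Rightarrow> Inr (v, b)))"

definition subst :: "('v, 'e) graph \<Rightarrow> ('v \<Rightarrow> ('a, 'b) graph) \<Rightarrow> ('v \<times> 'a, 'e set + ('v \<times> 'b)) graph" where
  "subst H L =
     \<lparr> gV = Sigma (gV H) (\<lambda>v. gV (L v)),
       gE = (\<lambda>e. Inl (collapse_rel H L `` {e})) ` gE H \<union>
            {Inr (v, b) | v b. v \<in> gV H \<and> b \<in> gE (L v) \<and> b \<notin> set (ginG (L v)) \<and> b \<notin> set (goutG (L v))},
       gin = (\<lambda>(v, u). map (sub_edge H L v) (gin (L v) u)),
       gout = (\<lambda>(v, u). map (sub_edge H L v) (gout (L v) u)),
       ginG = map (\<lambda>e. Inl (collapse_rel H L `` {e})) (ginG H),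
       goutG = map (\<lambda>e. Inl (collapse_rel H L `` {e})) (goutG H) \<rparr>"

record ('a, 'b, 'v, 'e) decgraph =
  dg   :: "('a, 'b) graph"
  dcol :: "'b \<Rightarrow> 'e"
  dvt  :: "'a \<Rightarrow> 'v"

definition decorated :: "('v, 'e) graph \<Rightarrow> ('a, 'b, 'v, 'e) decgraph \<Rightarrow> bool" where
  "decorated G D \<longleftrightarrow> wf_graph (dg D) \<and>
     (\<forall>b\<in>gE (dg D). dcol D b \<in> gE G) \<and>
     (\<forall>u\<in>gV (dg D). dvt D u \<in> gV G \<and>
        map (dcol D) (gin (dg D) u) = gin G (dvt D u) \<and>
        map (dcol D) (gout (dg D) u) = gout G (dvt D u))"

definition gamma_op :: "('v, 'e) graph \<Rightarrow> 'e list \<Rightarrow> 'e list \<Rightarrow> ('a, 'b, 'v, 'e) decgraph \<Rightarrow> bool" where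
  "gamma_op G cs ds D \<longleftrightarrow> decorated G D \<and>
     map (dcol D) (ginG (dg D)) = cs \<and> map (dcol D) (goutG (dg D)) = ds"

text \<open>Isomorphism of decorated graphs (operations of Gamma(G) are isomorphism classes).\<close>
definition dec_iso :: "('a1, 'b1, 'v, 'e) decgraph \<Rightarrow> ('a2, 'b2, 'v, 'e) decgraph \<Rightarrow> bool" where
  "dec_iso D1 D2 \<longleftrightarrow> (\<exists>\<alpha> \<beta>. graph_iso (dg D1) (dg D2) \<alpha> \<beta> \<and>
     (\<forall>b\<in>gE (dg D1). dcol D2 (\<beta> b) = dcol D1 b) \<and>
     (\<forall>u\<in>gV (dg D1). dvt D2 (\<alpha> u) = dvt D1 u))"

text \<open>A properad morphism Gamma(H) -> Gamma(G), given by f0 on edges and f1 on vertices.\<close>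
definition properad_morphism ::
  "('vH, 'eH) graph \<Rightarrow> ('vG, 'eG) graph \<Rightarrow> ('eH \<Rightarrow> 'eG) \<Rightarrow> ('vH \<Rightarrow> ('a, 'b, 'vG, 'eG) decgraph) \<Rightarrow> bool" where
  "properad_morphism H G f0 f1 \<longleftrightarrow>
     (\<forall>e\<in>gE H. f0 e \<in> gE G) \<and>
     (\<forall>v\<in>gV H. gamma_op G (map f0 (gin H v)) (map f0 (gout H v)) (f1 v))"

definition image_dg ::
  "('vH, 'eH) graph \<Rightarrow> ('eH \<Rightarrow> 'eG) \<Rightarrow> ('vH \<Rightarrow> ('a, 'b, 'vG, 'eG) decgraph)
     \<Rightarrow> ('vH \<times> 'a, 'eH set + ('vH \<times> 'b), 'vG, 'eG) decgraph" where
  "image_dg H f0 f1 =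
     \<lparr> dg = subst H (\<lambda>v. dg (f1 v)),
       dcol = (\<lambda>x. case x of Inl C \<Rightarrow> f0 (SOME e. e \<in> C) | Inr (v, b) \<Rightarrow> dcol (f1 v) b),
       dvt = (\<lambda>(v, u). dvt (f1 v) u) \<rparr>"

text \<open>A G-decorated graph M is (identified via its decorations with) a subgraph of G if
there is a graph substitution G = K{L_v} (up to isomorphism) with L_w = M (up to isomorphism)
for some vertex w of K, such that the resulting embedding of M into G is given by the
decorations of M.  Finite graphs are taken with natural-number labels, which is no loss of
generality.\<close>
definition is_subgraph :: "('vG, 'eG) graph \<Rightarrow> ('a, 'b, 'vG, 'eG) decgraph \<Rightarrow> bool" where
  "is_subgraph G M \<longleftrightarrow>
     (\<exists>(K :: (nat, nat) graph) (L :: nat \<Rightarrow> (nat, nat) graph) w \<alpha> \<beta> \<alpha>' \<beta>'.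
        wf_graph K \<and> w \<in> gV K \<and>
        (\<forall>v\<in>gV K. wf_graph (L v) \<and> length (ginG (L v)) = length (gin K v) \<and>
                    length (goutG (L v)) = length (gout K v)) \<and>
        graph_iso (dg M) (L w) \<alpha>' \<beta>' \<and>
        graph_iso (subst K L) G \<alpha> \<beta> \<and>
        (\<forall>b\<in>gE (dg M). \<beta> (sub_edge K L w (\<beta>' b)) = dcol M b) \<and>
        (\<forall>u\<in>gV (dg M). \<alpha> (w, \<alpha>' u) = dvt M u))"

end

theory Submission
  imports Defs
begin


lemma wfD:
  assumes "wf_graph G"
  shows wfD_fin: "finite (gV G)" "finite (gE G)" and wfD_ne: "gV G \<noteq> {} \<or> gE G \<noteq> {}"
   and wfD_v: "\<And>v. v\<in>gV G \<Longrightarrow> distinct (gin G v) \<and> distinct (gout G v) \<and>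
                 set (gin G v) \<subseteq> gE G \<and> set (gout G v) \<subseteq> gE G"
   and wfD_g: "distinct (ginG G)" "distinct (goutG G)" "set (ginG G) \<subseteq> gE G" "set (goutG G) \<subseteq> gE G"
   and wfD_src: "\<And>e. e\<in>gE G \<Longrightarrow> (if e \<in> set (ginG G) then 1 else 0) + card {v \<in> gV G. e \<in> set (gout G v)} = (1::nat)"
   and wfD_tgt: "\<And>e. e\<in>gE G \<Longrightarrow> (if e \<in> set (goutG G) then 1 else 0) + card {v \<in> gV G. e \<in> set (gin G v)} = (1::nat)"
   and wfD_conn: "\<And>x y. x \<in> Inl ` gV G \<union> Inr ` gE G \<Longrightarrow> y \<in> Inl ` gV G \<union> Inr ` gE G \<Longrightarrow>
         (x, y) \<in> (incidence G \<union> (incidence G)\<inverse>)\<^sup>*"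
   and wfD_acyc: "acyclic (vadj G)"
  using assms unfolding wf_graph_def by (simp_all only:)



lemma wf_tgt_unique:
  assumes "wf_graph K" "e \<in> gE K" "x \<in> gV K" "y \<in> gV K" "e \<in> set (gin K x)" "e \<in> set (gin K y)"
  shows "x = y"
proof -
  have c: "(if e \<in> set (goutG K) then 1 else 0) + card {v \<in> gV K. e \<in> set (gin K v)} = (1::nat)"
    using wfD_tgt[OF assms(1,2)] wfD_src[OF assms(1,2)] by simp_all
  have f: "finite {v \<in> gV K. e \<in> set (gin K v)}" using wfD_fin[OF assms(1)] by auto
  have "card {v \<in> gV K. e \<in> set (gin K v)} \<le> Suc 0" using c by (auto split: if_splits)
  then show ?thesis using card_le_Suc0_iff_eq[OF f] assms by blast
qed

lemma wf_src_unique: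
  assumes "wf_graph K" "e \<in> gE K" "x \<in> gV K" "y \<in> gV K" "e \<in> set (gout K x)" "e \<in> set (gout K y)"
  shows "x = y"
proof -
  have c: "(if e \<in> set (ginG K) then 1 else 0) + card {v \<in> gV K. e \<in> set (gout K v)} = (1::nat)"
    using wfD_tgt[OF assms(1,2)] wfD_src[OF assms(1,2)] by simp_all
  have f: "finite {v \<in> gV K. e \<in> set (gout K v)}" using wfD_fin[OF assms(1)] by auto
  have "card {v \<in> gV K. e \<in> set (gout K v)} \<le> Suc 0" using c by (auto split: if_splits)
  then show ?thesis using card_le_Suc0_iff_eq[OF f] assms by blast
qed

lemma wf_in_not_outG:
  assumes "wf_graph K" "x \<in> gV K" "e \<in> set (gin K x)"
  shows "e \<notin> set (goutG K)"
proof
  assume a: "e \<in> set (goutG K)"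
  have eE: "e \<in> gE K" using wfD_v[OF assms(1,2)] assms(3) by blast
  have c: "(if e \<in> set (goutG K) then 1 else 0) + card {v \<in> gV K. e \<in> set (gin K v)} = (1::nat)"
    using wfD_tgt[OF assms(1) eE] wfD_src[OF assms(1) eE] by simp_all
  have f: "finite {v \<in> gV K. e \<in> set (gin K v)}" using wfD_fin[OF assms(1)] by auto
  have "card {v \<in> gV K. e \<in> set (gin K v)} = 0" using c a by simp
  then show False using f assms by auto
qed

lemma wf_out_not_inG:
  assumes "wf_graph K" "x \<in> gV K" "e \<in> set (gout K x)"
  shows "e \<notin> set (ginG K)"
proof
  assume a: "e \<in> set (ginG K)"
  have eE: "e \<in> gE K" using wfD_v[OF assms(1,2)] assms(3) by blast
  have c: "(if e \<in> set (ginG K) then 1 else 0) + card {v \<in> gV K. e \<in> set (gout K v)} = (1::nat)"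
    using wfD_tgt[OF assms(1) eE] wfD_src[OF assms(1) eE] by simp_all
  have f: "finite {v \<in> gV K. e \<in> set (gout K v)}" using wfD_fin[OF assms(1)] by auto
  have "card {v \<in> gV K. e \<in> set (gout K v)} = 0" using c a by simp
  then show False using f assms by auto
qed

lemma wf_notoutG_tgt:
  assumes "wf_graph K" "e \<in> gE K" "e \<notin> set (goutG K)"
  shows "\<exists>x\<in>gV K. e \<in> set (gin K x)"
proof -
  have c: "(if e \<in> set (goutG K) then 1 else 0) + card {v \<in> gV K. e \<in> set (gin K v)} = (1::nat)"
    using wfD_tgt[OF assms(1,2)] wfD_src[OF assms(1,2)] by simp_all
  then have "card {v \<in> gV K. e \<in> set (gin K v)} = 1" using assms(3) by simp
  then have "{v \<in> gV K. e \<in> set (gin K v)} \<noteq> {}" by (metis card.empty zero_neq_one)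
  then show ?thesis by auto
qed

lemma wf_notinG_src:
  assumes "wf_graph K" "e \<in> gE K" "e \<notin> set (ginG K)"
  shows "\<exists>x\<in>gV K. e \<in> set (gout K x)"
proof -
  have c: "(if e \<in> set (ginG K) then 1 else 0) + card {v \<in> gV K. e \<in> set (gout K v)} = (1::nat)"
    using wfD_tgt[OF assms(1,2)] wfD_src[OF assms(1,2)] by simp_all
  then have "card {v \<in> gV K. e \<in> set (gout K v)} = 1" using assms(3) by simp
  then have "{v \<in> gV K. e \<in> set (gout K v)} \<noteq> {}" by (metis card.empty zero_neq_one)
  then show ?thesis by auto
qed

lemma wf_connected_prop:
  assumes "wf_graph K" and z: "z \<in> Inl ` gV K \<union> Inr ` gE K" "P z"
    and cl: "\<And>x y. (x, y) \<in> incidence K \<Longrightarrow> P x \<longleftrightarrow> P y"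
    and y: "y \<in> Inl ` gV K \<union> Inr ` gE K"
  shows "P y"
proof -
  have "(z, y) \<in> (incidence K \<union> (incidence K)\<inverse>)\<^sup>*"
    using wfD_conn[OF assms(1) z(1) y] .
  then show ?thesis
  proof (induction rule: rtrancl_induct)
    case base then show ?case using z by simp
  next
    case (step a b) then show ?case using cl by blast
  qed
qed

lemma dist_single: "set xs = {b} \<Longrightarrow> distinct xs \<Longrightarrow> xs = [b]"
proof -
  assume a: "set xs = {b}" "distinct xs"
  then have "length xs = 1" using distinct_card by fastforce
  then obtain y where "xs = [y]" by (auto simp: length_Suc_conv)
  then show ?thesis using a by simp
qed

lemma wf_down:
  assumes "wf_graph X" "gV X = {}"
  shows "\<exists>b. gE X = {b} \<and> ginG X = [b] \<and> goutG X = [b]"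
proof -
  have ne: "gE X \<noteq> {}" using wfD_ne[OF assms(1)] assms(2) by auto
  have inc: "incidence X = {}" using assms(2) unfolding incidence_def by auto
  have one: "\<And>e1 e2. e1 \<in> gE X \<Longrightarrow> e2 \<in> gE X \<Longrightarrow> e1 = e2"
  proof -
    fix e1 e2 assume "e1 \<in> gE X" "e2 \<in> gE X"
    then have "(Inr e1, Inr e2) \<in> (incidence X \<union> (incidence X)\<inverse>)\<^sup>*"
      using wfD_conn[OF assms(1)] by blast
    then show "e1 = e2" using inc by simp
  qed
  then obtain b where gE: "gE X = {b}" using ne by blast
  have bin: "b \<in> set (ginG X)" using wf_notinG_src[OF assms(1)] assms gE by auto
  have bout: "b \<in> set (goutG X)" using wf_notoutG_tgt[OF assms(1)] assms gE by auto
  have d1: "distinct (ginG X)" "set (ginG X) \<subseteq> gE X" and d2: "distinct (goutG X)" "set (goutG X) \<subseteq> gE X"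
    using wfD_g[OF assms(1)] by auto
  have s1: "set (ginG X) = {b}" using d1 bin gE by auto
  have s2: "set (goutG X) = {b}" using d2 bout gE by auto
  have "ginG X = [b]" using s1 d1(1)
    by (rule dist_single)
  moreover have "goutG X = [b]" using s2 d2(1)
    by (rule dist_single)
  ultimately show ?thesis using gE by blast
qed

lemma cr_lemma:
  assumes sv: "single_valued S" and "(a, c) \<in> (S \<union> S\<inverse>)\<^sup>*"
  shows "\<exists>m. (a, m) \<in> S\<^sup>* \<and> (c, m) \<in> S\<^sup>*"
  using assms(2)
proof (induction rule: rtrancl_induct)
  case base then show ?case by blast
next
  case (step b c)
  then obtain m where m: "(a, m) \<in> S\<^sup>*" "(b, m) \<in> S\<^sup>*" by blast
  show ?case
  proof (cases "(b, c) \<in> S")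
    case True
    show ?thesis
    proof (cases "b = m")
      case True then show ?thesis using m \<open>(b, c) \<in> S\<close>
        by (meson rtrancl.rtrancl_into_rtrancl rtrancl.rtrancl_refl)
    next
      case False
      then obtain b1 where "(b, b1) \<in> S" "(b1, m) \<in> S\<^sup>*" using m(2) by (meson converse_rtranclE)
      then have "b1 = c" using sv True unfolding single_valued_def by blast
      then show ?thesis using m \<open>(b1, m) \<in> S\<^sup>*\<close> by blast
    qed
  next
    case False
    then have "(c, b) \<in> S" using step by blast
    then show ?thesis using m by (meson converse_rtrancl_into_rtrancl)
  qed
qed




definition Sdn :: "('v, 'e) graph \<Rightarrow> ('v \<Rightarrow> ('a, 'b) graph) \<Rightarrow> 'e rel" where
  "Sdn K L = {(hd (gin K v), hd (gout K v)) | v. v \<in> gV K \<and> gV (L v) = {}}"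

lemma collapse_eq: "collapse_rel K L = (Sdn K L \<union> (Sdn K L)\<inverse>)\<^sup>*"
  unfolding collapse_rel_def Sdn_def Let_def by simp

lemma vadj_I: "u \<in> gV K \<Longrightarrow> w \<in> gV K \<Longrightarrow> e \<in> set (gout K u) \<Longrightarrow> e \<in> set (gin K w) \<Longrightarrow> (u, w) \<in> vadj K"
  unfolding vadj_def by blast

lemma in_out_disj:
  assumes "wf_graph K" "w \<in> gV K"
  shows "set (gin K w) \<inter> set (gout K w) = {}"
proof (rule ccontr)
  assume "set (gin K w) \<inter> set (gout K w) \<noteq> {}"
  then obtain e where "e \<in> set (gin K w)" "e \<in> set (gout K w)" by blast
  then have "(w, w) \<in> vadj K" using vadj_I assms(2) by metis
  then show False using wfD_acyc[OF assms(1)] unfolding acyclic_def by blast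
qed

locale dnloc =
  fixes K :: "('v, 'e) graph" and L :: "'v \<Rightarrow> ('a, 'b) graph"
  assumes wfK: "wf_graph K"
    and hL: "\<And>x. x \<in> gV K \<Longrightarrow> gV (L x) = {} \<Longrightarrow> length (gin K x) = 1 \<and> length (gout K x) = 1"
begin

lemma S_mem:
  assumes "(a, b) \<in> Sdn K L"
  shows "\<exists>x\<in>gV K. gV (L x) = {} \<and> gin K x = [a] \<and> gout K x = [b]"
proof -
  obtain x where x: "x \<in> gV K" "gV (L x) = {}" "a = hd (gin K x)" "b = hd (gout K x)"
    using assms unfolding Sdn_def by blast
  have "length (gin K x) = 1" "length (gout K x) = 1" using hL x by auto
  then have "gin K x = [a]" "gout K x = [b]" using x
    by (auto simp: length_Suc_conv)
  then show ?thesis using x by blast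
qed

lemma sv: "single_valued (Sdn K L)"
  unfolding single_valued_def
proof (intro allI impI)
  fix a b c assume "(a, b) \<in> Sdn K L" "(a, c) \<in> Sdn K L"
  then obtain x y where x: "x\<in>gV K" "gin K x = [a]" "gout K x = [b]" and y: "y\<in>gV K" "gin K y = [a]" "gout K y = [c]"
    using S_mem by meson
  have "a \<in> gE K" using wfD_v[OF wfK x(1)] x by auto
  then have "x = y" using wf_tgt_unique[OF wfK _ x(1) y(1)] x y by simp
  then show "b = c" using x y by simp
qed

lemma sv': "single_valued ((Sdn K L)\<inverse>)"
  unfolding single_valued_def
proof (intro allI impI)
  fix a b c assume "(a, b) \<in> (Sdn K L)\<inverse>" "(a, c) \<in> (Sdn K L)\<inverse>"
  then obtain x y where x: "x\<in>gV K" "gin K x = [b]" "gout K x = [a]" and y: "y\<in>gV K" "gin K y = [c]" "gout K y = [a]"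
    using S_mem by (meson converseD)
  have "a \<in> gE K" using wfD_v[OF wfK x(1)] x by auto
  then have "x = y" using wf_src_unique[OF wfK _ x(1) y(1)] x y by simp
  then show "b = c" using x y by simp
qed

lemma nosucc:
  assumes "w \<in> gV K" "gV (L w) \<noteq> {}" "e \<in> set (gin K w)" "(e, z) \<in> Sdn K L"
  shows False
proof -
  obtain x where x: "x\<in>gV K" "gV (L x) = {}" "gin K x = [e]" using S_mem assms(4) by blast
  have "e \<in> gE K" using wfD_v[OF wfK x(1)] x by auto
  then have "x = w" using wf_tgt_unique[OF wfK _ x(1) assms(1)] x assms by simp
  then show False using x assms by simp
qed

lemma nopred:
  assumes "w \<in> gV K" "gV (L w) \<noteq> {}" "e \<in> set (gout K w)" "(z, e) \<in> Sdn K L"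
  shows False
proof -
  obtain x where x: "x\<in>gV K" "gV (L x) = {}" "gout K x = [e]" using S_mem assms(4) by blast
  have "e \<in> gE K" using wfD_v[OF wfK x(1)] x by auto
  then have "x = w" using wf_src_unique[OF wfK _ x(1) assms(1)] x assms by simp
  then show False using x assms by simp
qed

lemma S_trancl:
  assumes "(a, b) \<in> (Sdn K L)\<^sup>+" and u: "u \<in> gV K" "a \<in> set (gout K u)"
  shows "\<exists>x\<in>gV K. b \<in> set (gout K x) \<and> (u, x) \<in> (vadj K)\<^sup>+"
  using assms(1)
proof (induction rule: trancl_induct)
  case (base y)
  obtain x where x: "x\<in>gV K" "gin K x = [a]" "gout K x = [y]" using S_mem base by blast
  have "(u, x) \<in> vadj K" using vadj_I[OF u(1) x(1)] u x by simp
  then have "(u, x) \<in> (vadj K)\<^sup>+" by blast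
  moreover have "y \<in> set (gout K x)" using x by simp
  ultimately show ?case using x(1) by blast
next
  case (step y z)
  obtain x where x: "x\<in>gV K" "y \<in> set (gout K x)" "(u, x) \<in> (vadj K)\<^sup>+" using step by blast
  obtain x' where x': "x'\<in>gV K" "gin K x' = [y]" "gout K x' = [z]" using S_mem step(2) by blast
  have "(x, x') \<in> vadj K" using vadj_I[OF x(1) x'(1)] x x' by simp
  then have "(u, x') \<in> (vadj K)\<^sup>+" using x(3) by simp
  moreover have "z \<in> set (gout K x')" using x' by simp
  ultimately show ?case using x'(1) by blast
qed

lemma rt_nosucc: "(a, m) \<in> (Sdn K L)\<^sup>* \<Longrightarrow> (\<And>z. (a, z) \<notin> Sdn K L) \<Longrightarrow> m = a"
  by (erule converse_rtranclE) auto

lemma rt_nosucc': "(a, m) \<in> ((Sdn K L)\<inverse>)\<^sup>* \<Longrightarrow> (\<And>z. (z, a) \<notin> Sdn K L) \<Longrightarrow> m = a"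
  by (erule converse_rtranclE) auto

lemma class_inj:
  assumes w: "w \<in> gV K" "gV (L w) \<noteq> {}"
    and e1: "e1 \<in> set (gin K w) \<union> set (gout K w)" and e2: "e2 \<in> set (gin K w) \<union> set (gout K w)"
    and r: "(e1, e2) \<in> collapse_rel K L"
  shows "e1 = e2"
proof -
  let ?S = "Sdn K L"
  have R: "(e1, e2) \<in> (?S \<union> ?S\<inverse>)\<^sup>*" using r collapse_eq by metis
  have R': "(e2, e1) \<in> (?S \<union> ?S\<inverse>)\<^sup>*"
    using R by (metis converse_Un converse_converse rtrancl_converseI sup_commute)
  have R2: "(e1, e2) \<in> (?S\<inverse> \<union> (?S\<inverse>)\<inverse>)\<^sup>*" using R by (simp add: sup_commute)
  have mixed: "\<And>a c. a \<in> set (gin K w) \<Longrightarrow> c \<in> set (gout K w) \<Longrightarrow> (c, a) \<in> (?S \<union> ?S\<inverse>)\<^sup>* \<Longrightarrow> False"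
  proof -
    fix a c assume a: "a \<in> set (gin K w)" and c: "c \<in> set (gout K w)" and ca: "(c, a) \<in> (?S \<union> ?S\<inverse>)\<^sup>*"
    obtain m where m: "(c, m) \<in> ?S\<^sup>*" "(a, m) \<in> ?S\<^sup>*" using cr_lemma[OF sv ca] by blast
    have "m = a" using rt_nosucc[OF m(2)] nosucc[OF w a] by blast
    then have "(c, a) \<in> ?S\<^sup>*" using m by simp
    moreover have "c \<noteq> a" using in_out_disj[OF wfK w(1)] a c by blast
    ultimately have "(c, a) \<in> ?S\<^sup>+" by (meson rtranclD)
    then obtain x where x: "x\<in>gV K" "a \<in> set (gout K x)" "(w, x) \<in> (vadj K)\<^sup>+"
      using S_trancl w(1) c by blast
    have "(x, w) \<in> vadj K" using vadj_I[OF x(1) w(1) x(2) a] .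
    then have "(w, w) \<in> (vadj K)\<^sup>+" using x(3) by simp
    then show False using wfD_acyc[OF wfK] unfolding acyclic_def by blast
  qed
  show ?thesis
  proof (cases "e1 \<in> set (gin K w)")
    case True note t1 = this
    show ?thesis
    proof (cases "e2 \<in> set (gin K w)")
      case True
      obtain m where m: "(e1, m) \<in> ?S\<^sup>*" "(e2, m) \<in> ?S\<^sup>*" using cr_lemma[OF sv R] by blast
      have "m = e1" using rt_nosucc[OF m(1)] nosucc[OF w t1] by blast
      moreover have "m = e2" using rt_nosucc[OF m(2)] nosucc[OF w True] by blast
      ultimately show ?thesis by simp
    next
      case False
      then show ?thesis using mixed[OF t1 _ R'] e2 by blast
    qed
  next
    case False
    then have o1: "e1 \<in> set (gout K w)" using e1 by blast
    show ?thesis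
    proof (cases "e2 \<in> set (gin K w)")
      case True
      then show ?thesis using mixed[OF True o1 R] by blast
    next
      case False
      then have o2: "e2 \<in> set (gout K w)" using e2 by blast
      obtain m where m: "(e1, m) \<in> (?S\<inverse>)\<^sup>*" "(e2, m) \<in> (?S\<inverse>)\<^sup>*" using cr_lemma[OF sv' R2] by blast
      have "m = e1" using rt_nosucc'[OF m(1)] nopred[OF w o1] by blast
      moreover have "m = e2" using rt_nosucc'[OF m(2)] nopred[OF w o2] by blast
      ultimately show ?thesis by simp
    qed
  qed
qed

end



lemma mz: "length xs = length ys \<Longrightarrow> distinct xs \<Longrightarrow> b \<in> set xs \<Longrightarrow>
   \<exists>i<length xs. xs!i = b \<and> map_of (zip xs ys) b = Some (ys!i)"
  by (metis in_set_conv_nth map_of_zip_nth)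

definition port :: "('v, 'e) graph \<Rightarrow> ('v \<Rightarrow> ('a, 'b) graph) \<Rightarrow> 'v \<Rightarrow> 'b \<Rightarrow> 'e option" where
  "port K L w b = (case map_of (zip (ginG (L w)) (gin K w)) b of Some e \<Rightarrow> Some e
       | None \<Rightarrow> map_of (zip (goutG (L w)) (gout K w)) b)"

lemma sub_edge_port: "sub_edge K L w b = (case port K L w b of Some e \<Rightarrow> Inl (collapse_rel K L `` {e}) | None \<Rightarrow> Inr (w, b))"
  unfolding sub_edge_def port_def by (auto split: option.splits)

locale sloc =
  fixes K :: "('v, 'e) graph" and L :: "'v \<Rightarrow> ('a, 'b) graph"
  assumes wfK': "wf_graph K"
    and hL': "\<And>x. x \<in> gV K \<Longrightarrow> wf_graph (L x) \<and> length (ginG (L x)) = length (gin K x) \<and>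
                    length (goutG (L x)) = length (gout K x)"
begin

lemma hLd: "x \<in> gV K \<Longrightarrow> gV (L x) = {} \<Longrightarrow> length (gin K x) = 1 \<and> length (gout K x) = 1"
  using hL'[of x] wf_down[of "L x"] by fastforce

sublocale dnloc K L
  using wfK' hLd by unfold_locales auto

lemma port_None:
  assumes "w \<in> gV K"
  shows "port K L w b = None \<longleftrightarrow> b \<notin> set (ginG (L w)) \<and> b \<notin> set (goutG (L w))"
proof -
  have l: "length (ginG (L w)) = length (gin K w)" "length (goutG (L w)) = length (gout K w)"
    using hL'[OF assms] by auto
  have "port K L w b = None \<longleftrightarrow> map_of (zip (ginG (L w)) (gin K w)) b = None \<and> map_of (zip (goutG (L w)) (gout K w)) b = None"
    unfolding port_def by (simp split: option.split)
  then show ?thesis using map_of_zip_is_None[OF l(1)] map_of_zip_is_None[OF l(2)] by simp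
qed

lemma port_Some:
  assumes w: "w \<in> gV K" and p: "port K L w b = Some e"
  shows "(\<exists>i<length (ginG (L w)). ginG (L w) ! i = b \<and> gin K w ! i = e) \<or>
         (b \<notin> set (ginG (L w)) \<and> (\<exists>i<length (goutG (L w)). goutG (L w) ! i = b \<and> gout K w ! i = e))"
proof -
  have l: "length (ginG (L w)) = length (gin K w)" "length (goutG (L w)) = length (gout K w)"
    "wf_graph (L w)" using hL'[OF w] by auto
  show ?thesis
  proof (cases "b \<in> set (ginG (L w))")
    case True
    obtain i where i: "i<length (ginG (L w))" "ginG (L w)!i = b" "map_of (zip (ginG (L w)) (gin K w)) b = Some (gin K w!i)"
      using mz[OF l(1) wfD_g(1)[OF l(3)] True] by blast
    then have "e = gin K w ! i" using p unfolding port_def by simp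
    then show ?thesis using i by blast
  next
    case False
    then have n: "map_of (zip (ginG (L w)) (gin K w)) b = None" using l by simp
    have "b \<in> set (goutG (L w))" using p port_None[OF w] False by (metis option.distinct(1))
    then obtain i where i: "i<length (goutG (L w))" "goutG (L w)!i = b" "map_of (zip (goutG (L w)) (gout K w)) b = Some (gout K w!i)"
      using mz[OF l(2) wfD_g(2)[OF l(3)]] by blast
    then have "e = gout K w ! i" using p n unfolding port_def by simp
    then show ?thesis using i False by blast
  qed
qed

lemma port_set:
  assumes w: "w \<in> gV K" and p: "port K L w b = Some e"
  shows "e \<in> set (gin K w) \<union> set (gout K w)"
  using port_Some[OF w p] hL'[OF w] by (auto simp: in_set_conv_nth)

lemma port_inj:
  assumes w: "w \<in> gV K" and p1: "port K L w b1 = Some e" and p2: "port K L w b2 = Some e"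
  shows "b1 = b2"
proof -
  have l: "length (ginG (L w)) = length (gin K w)" "length (goutG (L w)) = length (gout K w)"
    using hL'[OF w] by auto
  have d: "distinct (gin K w)" "distinct (gout K w)" using wfD_v[OF wfK' w] by auto
  have dj: "set (gin K w) \<inter> set (gout K w) = {}" using in_out_disj[OF wfK' w] .
  from port_Some[OF w p1] port_Some[OF w p2] show ?thesis
  proof (elim disjE exE conjE)
    fix i j assume "i < length (ginG (L w))" "ginG (L w) ! i = b1" "gin K w ! i = e"
      "j < length (ginG (L w))" "ginG (L w) ! j = b2" "gin K w ! j = e"
    then show ?thesis using d l nth_eq_iff_index_eq by metis
  next
    fix i j assume "i < length (ginG (L w))" "ginG (L w) ! i = b1" "gin K w ! i = e"
      "j < length (goutG (L w))" "goutG (L w) ! j = b2" "gout K w ! j = e"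
    then show ?thesis using dj l by (metis disjoint_iff nth_mem)
  next
    fix i j assume "i < length (goutG (L w))" "goutG (L w) ! i = b1" "gout K w ! i = e"
      "j < length (ginG (L w))" "ginG (L w) ! j = b2" "gin K w ! j = e"
    then show ?thesis using dj l by (metis disjoint_iff nth_mem)
  next
    fix i j assume "i < length (goutG (L w))" "goutG (L w) ! i = b1" "gout K w ! i = e"
      "j < length (goutG (L w))" "goutG (L w) ! j = b2" "gout K w ! j = e"
    then show ?thesis using d l nth_eq_iff_index_eq by metis
  qed
qed

lemma sub_edge_inj:
  assumes w: "w \<in> gV K"
  shows "inj_on (sub_edge K L w) (gE (L w))"
proof (cases "gV (L w) = {}")
  case True
  then obtain b where "gE (L w) = {b}" using wf_down hL'[OF w] by blast
  then show ?thesis by simp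
next
  case ne: False
  show ?thesis
  proof (rule inj_onI)
    fix b1 b2 assume b: "b1 \<in> gE (L w)" "b2 \<in> gE (L w)" "sub_edge K L w b1 = sub_edge K L w b2"
    show "b1 = b2"
    proof (cases "port K L w b1")
      case None1: None
      show ?thesis
      proof (cases "port K L w b2")
        case None
        then show ?thesis using b None1 by (simp add: sub_edge_port)
      next
        case (Some e2)
        then show ?thesis using b None1 by (simp add: sub_edge_port)
      qed
    next
      case (Some e1)
      note S1 = this
      show ?thesis
      proof (cases "port K L w b2")
        case None
        then show ?thesis using b S1 by (simp add: sub_edge_port)
      next
        case (Some e2)
        then have eq: "collapse_rel K L `` {e1} = collapse_rel K L `` {e2}"
          using b S1 by (simp add: sub_edge_port)
        have "(e2, e2) \<in> collapse_rel K L" unfolding collapse_eq by simp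
        then have "(e1, e2) \<in> collapse_rel K L" using eq by blast
        then have "e1 = e2" using class_inj[OF w ne port_set[OF w S1] port_set[OF w Some]] by blast
        then show ?thesis using port_inj[OF w S1] Some by simp
      qed
    qed
  qed
qed

lemma sub_edge_in:
  assumes w: "w \<in> gV K" and b: "b \<in> gE (L w)"
  shows "sub_edge K L w b \<in> gE (subst K L)"
proof (cases "port K L w b")
  case None
  then have "b \<notin> set (ginG (L w))" "b \<notin> set (goutG (L w))" using port_None[OF w] by auto
  then show ?thesis using None w b by (auto simp: sub_edge_port subst_def)
next
  case (Some e)
  then have "e \<in> gE K" using port_set[OF w Some] wfD_v[OF wfK' w] by auto
  then show ?thesis using Some by (auto simp: sub_edge_port subst_def)
qed

end



lemma subgraph_inj:
  assumes "is_subgraph G M"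
  shows "inj_on (dcol M) (gE (dg M)) \<and> inj_on (dvt M) (gV (dg M))"
proof -
  obtain K :: "(nat, nat) graph" and L :: "nat \<Rightarrow> (nat, nat) graph" and w \<alpha> \<beta> \<alpha>' \<beta>' where
    K: "wf_graph K" "w \<in> gV K"
    and hL: "\<forall>v\<in>gV K. wf_graph (L v) \<and> length (ginG (L v)) = length (gin K v) \<and>
                    length (goutG (L v)) = length (gout K v)"
    and i1: "graph_iso (dg M) (L w) \<alpha>' \<beta>'"
    and i2: "graph_iso (subst K L) G \<alpha> \<beta>"
    and c: "\<forall>b\<in>gE (dg M). \<beta> (sub_edge K L w (\<beta>' b)) = dcol M b"
    and d: "\<forall>u\<in>gV (dg M). \<alpha> (w, \<alpha>' u) = dvt M u"
    using assms unfolding is_subgraph_def by blast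
  interpret sloc K L using K hL by unfold_locales auto
  have b1: "bij_betw \<alpha>' (gV (dg M)) (gV (L w))" "bij_betw \<beta>' (gE (dg M)) (gE (L w))"
    using i1 unfolding graph_iso_def by auto
  have b2: "bij_betw \<alpha> (gV (subst K L)) (gV G)" "bij_betw \<beta> (gE (subst K L)) (gE G)"
    using i2 unfolding graph_iso_def by auto
  have "inj_on (dcol M) (gE (dg M))"
  proof (rule inj_onI)
    fix x y assume xy: "x \<in> gE (dg M)" "y \<in> gE (dg M)" "dcol M x = dcol M y"
    have m: "\<beta>' x \<in> gE (L w)" "\<beta>' y \<in> gE (L w)" using b1(2) xy by (auto dest: bij_betwE)
    have s: "sub_edge K L w (\<beta>' x) \<in> gE (subst K L)" "sub_edge K L w (\<beta>' y) \<in> gE (subst K L)"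
      using sub_edge_in[OF K(2)] m by auto
    have "\<beta> (sub_edge K L w (\<beta>' x)) = \<beta> (sub_edge K L w (\<beta>' y))" using c xy by simp
    then have "sub_edge K L w (\<beta>' x) = sub_edge K L w (\<beta>' y)"
      using b2(2) s unfolding bij_betw_def inj_on_def by blast
    then have "\<beta>' x = \<beta>' y" using sub_edge_inj[OF K(2)] m unfolding inj_on_def by blast
    then show "x = y" using b1(2) xy unfolding bij_betw_def inj_on_def by blast
  qed
  moreover have "inj_on (dvt M) (gV (dg M))"
  proof (rule inj_onI)
    fix x y assume xy: "x \<in> gV (dg M)" "y \<in> gV (dg M)" "dvt M x = dvt M y"
    have m: "\<alpha>' x \<in> gV (L w)" "\<alpha>' y \<in> gV (L w)" using b1(1) xy by (auto dest: bij_betwE)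
    have s: "(w, \<alpha>' x) \<in> gV (subst K L)" "(w, \<alpha>' y) \<in> gV (subst K L)"
      using K(2) m by (auto simp: subst_def)
    have "\<alpha> (w, \<alpha>' x) = \<alpha> (w, \<alpha>' y)" using d xy by simp
    then have "\<alpha>' x = \<alpha>' y" using b2(1) s unfolding bij_betw_def inj_on_def by blast
    then show "x = y" using b1(1) xy unfolding bij_betw_def inj_on_def by blast
  qed
  ultimately show ?thesis by blast
qed

lemma image_inj:
  assumes wfH: "wf_graph H" and pm: "properad_morphism H G f0 f1"
    and inj1: "inj_on (dcol (image_dg H f0 f1)) (gE (dg (image_dg H f0 f1)))"
    and inj2: "inj_on (dvt (image_dg H f0 f1)) (gV (dg (image_dg H f0 f1)))"
    and v: "v \<in> gV H"
  shows "inj_on (dcol (f1 v)) (gE (dg (f1 v))) \<and> inj_on (dvt (f1 v)) (gV (dg (f1 v)))"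
proof -
  let ?L = "\<lambda>x. dg (f1 x)"
  let ?M = "image_dg H f0 f1"
  have go: "\<And>x. x \<in> gV H \<Longrightarrow> gamma_op G (map f0 (gin H x)) (map f0 (gout H x)) (f1 x)"
    using pm unfolding properad_morphism_def by blast
  have go2: "\<And>x. x \<in> gV H \<Longrightarrow> wf_graph (?L x) \<and> map (dcol (f1 x)) (ginG (?L x)) = map f0 (gin H x)
      \<and> map (dcol (f1 x)) (goutG (?L x)) = map f0 (gout H x)"
    using go unfolding gamma_op_def decorated_def by blast
  interpret sloc H ?L
    using wfH go2 by unfold_locales (metis length_map)+
  have Sc: "\<And>a b. (a, b) \<in> Sdn H ?L \<Longrightarrow> f0 a = f0 b"
  proof -
    fix a b assume "(a, b) \<in> Sdn H ?L"
    then obtain x where x: "x\<in>gV H" "gV (?L x) = {}" "gin H x = [a]" "gout H x = [b]" using S_mem by blast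
    obtain b0 where "ginG (?L x) = [b0]" "goutG (?L x) = [b0]" using wf_down go2[OF x(1)] x(2) by blast
    then show "f0 a = f0 b" using go2[OF x(1)] x by (simp, metis)
  qed
  have Rc: "\<And>a c. (a, c) \<in> collapse_rel H ?L \<Longrightarrow> f0 a = f0 c"
  proof -
    fix a c assume "(a, c) \<in> collapse_rel H ?L"
    then have "(a, c) \<in> (Sdn H ?L \<union> (Sdn H ?L)\<inverse>)\<^sup>*" using collapse_eq by metis
    then show "f0 a = f0 c"
      by (induction rule: rtrancl_induct) (auto dest: Sc)
  qed
  have key: "\<And>b. b \<in> gE (?L v) \<Longrightarrow> dcol ?M (sub_edge H ?L v b) = dcol (f1 v) b"
  proof -
    fix b assume b: "b \<in> gE (?L v)"
    show "dcol ?M (sub_edge H ?L v b) = dcol (f1 v) b"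
    proof (cases "port H ?L v b")
      case None
      then show ?thesis by (simp add: sub_edge_port image_dg_def)
    next
      case (Some e)
      have "(e, e) \<in> collapse_rel H ?L" unfolding collapse_eq by simp
      then have "(SOME e'. e' \<in> collapse_rel H ?L `` {e}) \<in> collapse_rel H ?L `` {e}"
        by (meson ImageI singletonI someI)
      then have f: "f0 (SOME e'. e' \<in> collapse_rel H ?L `` {e}) = f0 e" using Rc by (metis Image_singleton_iff)
      have "dcol (f1 v) b = f0 e"
        using port_Some[OF v Some] go2[OF v]
        by (metis length_map nth_map)
      then show ?thesis using Some f by (simp add: sub_edge_port image_dg_def)
    qed
  qed
  have "inj_on (dcol (f1 v)) (gE (dg (f1 v)))"
  proof (rule inj_onI)
    fix x y assume xy: "x \<in> gE (dg (f1 v))" "y \<in> gE (dg (f1 v))" "dcol (f1 v) x = dcol (f1 v) y"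
    have s: "sub_edge H ?L v x \<in> gE (dg ?M)" "sub_edge H ?L v y \<in> gE (dg ?M)"
      using sub_edge_in[OF v] xy by (auto simp: image_dg_def)
    have "dcol ?M (sub_edge H ?L v x) = dcol ?M (sub_edge H ?L v y)" using key xy by simp
    then have "sub_edge H ?L v x = sub_edge H ?L v y" using inj1 s unfolding inj_on_def by blast
    then show "x = y" using sub_edge_inj[OF v] xy unfolding inj_on_def by blast
  qed
  moreover have "inj_on (dvt (f1 v)) (gV (dg (f1 v)))"
  proof (rule inj_onI)
    fix x y assume xy: "x \<in> gV (dg (f1 v))" "y \<in> gV (dg (f1 v))" "dvt (f1 v) x = dvt (f1 v) y"
    have s: "(v, x) \<in> gV (dg ?M)" "(v, y) \<in> gV (dg ?M)" using v xy by (auto simp: image_dg_def subst_def)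
    have "dvt ?M (v, x) = dvt ?M (v, y)" using xy by (simp add: image_dg_def)
    then have "(v, x) = (v, y)" using inj2 s unfolding inj_on_def by blast
    then show "x = y" by simp
  qed
  ultimately show ?thesis by blast
qed




lemma decD:
  assumes "decorated G D"
  shows "wf_graph (dg D)" "\<And>b. b\<in>gE (dg D) \<Longrightarrow> dcol D b \<in> gE G"
    "\<And>u. u\<in>gV (dg D) \<Longrightarrow> dvt D u \<in> gV G \<and>
        map (dcol D) (gin (dg D) u) = gin G (dvt D u) \<and>
        map (dcol D) (gout (dg D) u) = gout G (dvt D u)"
  using assms unfolding decorated_def by blast+

lemma inc_cases:
  assumes "(x, y) \<in> incidence X"
  obtains u b where "x = Inl u" "y = Inr b" "u \<in> gV X" "b \<in> set (gin X u) \<or> b \<in> set (gout X u)"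
  using assms unfolding incidence_def by blast

lemma G_cover:
  fixes D' :: "('c, 'd, 'v, 'e) decgraph"
  assumes wfG: "wf_graph G" and dec: "decorated G D'" and e: "ginG (dg D') = []" "goutG (dg D') = []"
  shows "gV G \<subseteq> dvt D' ` gV (dg D') \<and> gE G \<subseteq> dcol D' ` gE (dg D')"
proof -
  define P where "P = (\<lambda>x. case x of Inl y \<Rightarrow> y \<in> dvt D' ` gV (dg D') | Inr g \<Rightarrow> g \<in> dcol D' ` gE (dg D'))"
  have wfD: "wf_graph (dg D')" using decD[OF dec] by blast
  have ne: "gV (dg D') \<noteq> {}"
  proof
    assume "gV (dg D') = {}"
    then show False using wf_down[OF wfD] e by auto
  qed
  then obtain u0 where u0: "u0 \<in> gV (dg D')" by blast
  have z: "Inl (dvt D' u0) \<in> Inl ` gV G \<union> Inr ` gE G" using decD(3)[OF dec u0] by blast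
  have Pz: "P (Inl (dvt D' u0))" using u0 unfolding P_def by simp
  have cl: "\<And>x y. (x, y) \<in> incidence G \<Longrightarrow> P x \<longleftrightarrow> P y"
  proof -
    fix x y assume "(x, y) \<in> incidence G"
    then obtain v g where vg: "x = Inl v" "y = Inr g" "v \<in> gV G" "g \<in> set (gin G v) \<or> g \<in> set (gout G v)"
      by (rule inc_cases)
    have gE: "g \<in> gE G" using vg wfD_v[OF wfG vg(3)] by blast
    show "P x \<longleftrightarrow> P y"
    proof
      assume "P x"
      then obtain u where u: "u \<in> gV (dg D')" "v = dvt D' u" using vg unfolding P_def by auto
      have "g \<in> set (map (dcol D') (gin (dg D') u)) \<or> g \<in> set (map (dcol D') (gout (dg D') u))"
        using decD(3)[OF dec u(1)] vg u by simp
      then show "P y" using vg wfD_v[OF wfD u(1)] unfolding P_def by auto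
    next
      assume "P y"
      then obtain b where b: "b \<in> gE (dg D')" "g = dcol D' b" using vg unfolding P_def by auto
      show "P x"
      proof (cases "g \<in> set (gin G v)")
        case True
        obtain u where u: "u \<in> gV (dg D')" "b \<in> set (gin (dg D') u)" using wf_notoutG_tgt[OF wfD b(1)] e by auto
        have "g \<in> set (gin G (dvt D' u))" using decD(3)[OF dec u(1)] u b
          by (metis image_eqI list.set_map)
        then have "v = dvt D' u" using wf_tgt_unique[OF wfG gE vg(3) _ True] decD(3)[OF dec u(1)] by blast
        then show ?thesis using u vg unfolding P_def by simp
      next
        case False
        then have F: "g \<in> set (gout G v)" using vg by blast
        obtain u where u: "u \<in> gV (dg D')" "b \<in> set (gout (dg D') u)" using wf_notinG_src[OF wfD b(1)] e by auto
        have "g \<in> set (gout G (dvt D' u))" using decD(3)[OF dec u(1)] u b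
          by (metis image_eqI list.set_map)
        then have "v = dvt D' u" using wf_src_unique[OF wfG gE vg(3) _ F] decD(3)[OF dec u(1)] by blast
        then show ?thesis using u vg unfolding P_def by simp
      qed
    qed
  qed
  have "\<And>y. y \<in> Inl ` gV G \<union> Inr ` gE G \<Longrightarrow> P y"
    using wf_connected_prop[of G _ P, OF wfG z Pz cl] by blast
  then show ?thesis unfolding P_def by force
qed




lemma map_mem: "map f xs = ys \<Longrightarrow> x \<in> set xs \<Longrightarrow> f x \<in> set ys"
  by auto

lemma D_cover:
  fixes D :: "('a, 'b, 'v, 'e) decgraph" and D' :: "('c, 'd, 'v, 'e) decgraph"
  assumes wfG: "wf_graph G" and dec: "decorated G D" and dec': "decorated G D'"
    and inj: "inj_on (dcol D) (gE (dg D))"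
    and ein: "map (dcol D) (ginG (dg D)) = map (dcol D') (ginG (dg D'))"
    and eout: "map (dcol D) (goutG (dg D)) = map (dcol D') (goutG (dg D'))"
  shows "dvt D ` gV (dg D) \<subseteq> dvt D' ` gV (dg D') \<and> dcol D ` gE (dg D) \<subseteq> dcol D' ` gE (dg D')"
proof -
  have wfD: "wf_graph (dg D)" using decD[OF dec] by blast
  have wfD': "wf_graph (dg D')" using decD[OF dec'] by blast
  show ?thesis
  proof (cases "gV (dg D) = {}")
    case True
    then obtain b where b: "gE (dg D) = {b}" "ginG (dg D) = [b]" using wf_down[OF wfD] by blast
    have "map (dcol D') (ginG (dg D')) = [dcol D b]" using ein b by simp
    then obtain b' where b': "ginG (dg D') = [b']" "dcol D' b' = dcol D b"
      by (auto simp: map_eq_Cons_conv)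
    have "b' \<in> gE (dg D')" using wfD_g(3)[OF wfD'] b' by simp
    then have "dcol D b \<in> dcol D' ` gE (dg D')" using b'(2) by (metis image_eqI)
    then show ?thesis using True b by auto
  next
    case neV: False
    show ?thesis
    proof (cases "ginG (dg D) = [] \<and> goutG (dg D) = []")
      case True
      then have "ginG (dg D') = []" "goutG (dg D') = []" using ein eout by auto
      then have c: "gV G \<subseteq> dvt D' ` gV (dg D') \<and> gE G \<subseteq> dcol D' ` gE (dg D')"
        using G_cover[OF wfG dec'] by blast
      have "dvt D ` gV (dg D) \<subseteq> gV G" "dcol D ` gE (dg D) \<subseteq> gE G" using decD[OF dec] by auto
      then show ?thesis using c by blast
    next
      case False
      then have "set (ginG (dg D)) \<union> set (goutG (dg D)) \<noteq> {}" by auto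
      then obtain b0 where b0: "b0 \<in> set (ginG (dg D)) \<union> set (goutG (dg D))" by (meson equals0I)
      define P where "P = (\<lambda>x. case x of Inl u \<Rightarrow> dvt D u \<in> dvt D' ` gV (dg D') | Inr b \<Rightarrow> dcol D b \<in> dcol D' ` gE (dg D'))"
      have b0E: "b0 \<in> gE (dg D)" using b0 wfD_g[OF wfD] by blast
      have "dcol D b0 \<in> set (map (dcol D') (ginG (dg D'))) \<union> set (map (dcol D') (goutG (dg D')))"
      proof -
        have "dcol D b0 \<in> set (map (dcol D) (ginG (dg D))) \<union> set (map (dcol D) (goutG (dg D)))"
          using b0 by auto
        then show ?thesis by (simp only: ein eout)
      qed
      then have Pz: "P (Inr b0)" using wfD_g[OF wfD'] unfolding P_def by auto
      have z: "Inr b0 \<in> Inl ` gV (dg D) \<union> Inr ` gE (dg D)" using b0E by blast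
      have cl: "\<And>x y. (x, y) \<in> incidence (dg D) \<Longrightarrow> P x \<longleftrightarrow> P y"
      proof -
        fix x y assume "(x, y) \<in> incidence (dg D)"
        then obtain u b where ub: "x = Inl u" "y = Inr b" "u \<in> gV (dg D)" "b \<in> set (gin (dg D) u) \<or> b \<in> set (gout (dg D) u)"
          by (rule inc_cases)
        have bE: "b \<in> gE (dg D)" using ub wfD_v[OF wfD ub(3)] by blast
        have gE: "dcol D b \<in> gE G" using decD(2)[OF dec bE] .
        show "P x \<longleftrightarrow> P y"
        proof
          assume "P x"
          then obtain u' where u': "u' \<in> gV (dg D')" "dvt D u = dvt D' u'" using ub unfolding P_def by auto
          have "dcol D b \<in> set (gin G (dvt D u)) \<or> dcol D b \<in> set (gout G (dvt D u))"
            using decD(3)[OF dec ub(3)] ub(4) map_mem by metis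
          then have "dcol D b \<in> set (map (dcol D') (gin (dg D') u')) \<or> dcol D b \<in> set (map (dcol D') (gout (dg D') u'))"
            using decD(3)[OF dec' u'(1)] u' by simp
          then show "P y" using ub wfD_v[OF wfD' u'(1)] unfolding P_def by auto
        next
          assume "P y"
          then obtain b' where b': "b' \<in> gE (dg D')" "dcol D b = dcol D' b'" using ub unfolding P_def by auto
          show "P x"
          proof (cases "b \<in> set (gin (dg D) u)")
            case True
            have nb: "b \<notin> set (goutG (dg D))" using wf_in_not_outG[OF wfD ub(3) True] .
            have nb': "b' \<notin> set (goutG (dg D'))"
            proof
              assume "b' \<in> set (goutG (dg D'))"
              then have "dcol D b \<in> set (map (dcol D) (goutG (dg D)))" using b' eout by simp
              then obtain b'' where "b'' \<in> set (goutG (dg D))" "dcol D b'' = dcol D b" by auto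
              moreover then have "b'' \<in> gE (dg D)" using wfD_g[OF wfD] by blast
              ultimately have "b'' = b" using inj bE unfolding inj_on_def by blast
              then show False using nb \<open>b'' \<in> set (goutG (dg D))\<close> by simp
            qed
            obtain u' where u': "u' \<in> gV (dg D')" "b' \<in> set (gin (dg D') u')" using wf_notoutG_tgt[OF wfD' b'(1) nb'] by blast
            have "dcol D' b' \<in> set (gin G (dvt D' u'))" using map_mem[OF conjunct1[OF conjunct2[OF decD(3)[OF dec' u'(1)]]] u'(2)] .
            then have g1: "dcol D b \<in> set (gin G (dvt D' u'))" using b'(2) by simp
            have g2: "dcol D b \<in> set (gin G (dvt D u))" using map_mem[of "dcol D"] decD(3)[OF dec ub(3)] True
              by blast
            have "dvt D u = dvt D' u'" using wf_tgt_unique[OF wfG gE _ _ g2 g1] decD(3)[OF dec ub(3)] decD(3)[OF dec' u'(1)] by blast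
            then show ?thesis using ub u' unfolding P_def by simp
          next
            case False
            then have T: "b \<in> set (gout (dg D) u)" using ub by blast
            have nb: "b \<notin> set (ginG (dg D))" using wf_out_not_inG[OF wfD ub(3) T] .
            have nb': "b' \<notin> set (ginG (dg D'))"
            proof
              assume "b' \<in> set (ginG (dg D'))"
              then have "dcol D b \<in> set (map (dcol D) (ginG (dg D)))" using b' ein by simp
              then obtain b'' where "b'' \<in> set (ginG (dg D))" "dcol D b'' = dcol D b" by auto
              moreover then have "b'' \<in> gE (dg D)" using wfD_g[OF wfD] by blast
              ultimately have "b'' = b" using inj bE unfolding inj_on_def by blast
              then show False using nb \<open>b'' \<in> set (ginG (dg D))\<close> by simp
            qed
            obtain u' where u': "u' \<in> gV (dg D')" "b' \<in> set (gout (dg D') u')" using wf_notinG_src[OF wfD' b'(1) nb'] by blast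
            have "dcol D' b' \<in> set (gout G (dvt D' u'))" using map_mem[OF conjunct2[OF conjunct2[OF decD(3)[OF dec' u'(1)]]] u'(2)] .
            then have g1: "dcol D b \<in> set (gout G (dvt D' u'))" using b'(2) by simp
            have g2: "dcol D b \<in> set (gout G (dvt D u))" using map_mem[of "dcol D"] decD(3)[OF dec ub(3)] T
              by blast
            have "dvt D u = dvt D' u'" using wf_src_unique[OF wfG gE _ _ g2 g1] decD(3)[OF dec ub(3)] decD(3)[OF dec' u'(1)] by blast
            then show ?thesis using ub u' unfolding P_def by simp
          qed
        qed
      qed
      have "\<And>y. y \<in> Inl ` gV (dg D) \<union> Inr ` gE (dg D) \<Longrightarrow> P y"
        using wf_connected_prop[of "dg D" _ P, OF wfD z Pz cl] by blast
      then show ?thesis unfolding P_def by force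
    qed
  qed
qed




lemma map_eq_inj:
  assumes "inj_on f A" "set xs \<subseteq> A" "set ys \<subseteq> A" "map f xs = map f ys"
  shows "xs = ys"
proof -
  have "inj_on f (set xs \<union> set ys)" using assms(1-3) by (meson inj_on_subset le_sup_iff)
  then show ?thesis using inj_on_map_eq_map assms(4) by blast
qed

lemma mk_iso:
  fixes D :: "('a, 'b, 'v, 'e) decgraph" and D' :: "('c, 'd, 'v, 'e) decgraph"
  assumes dec: "decorated G D" and dec': "decorated G D'"
    and i1: "inj_on (dcol D) (gE (dg D))" and i2: "inj_on (dvt D) (gV (dg D))"
    and i1': "inj_on (dcol D') (gE (dg D'))" and i2': "inj_on (dvt D') (gV (dg D'))"
    and V: "dvt D ` gV (dg D) = dvt D' ` gV (dg D')"
    and E: "dcol D ` gE (dg D) = dcol D' ` gE (dg D')"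
    and ein: "map (dcol D) (ginG (dg D)) = map (dcol D') (ginG (dg D'))"
    and eout: "map (dcol D) (goutG (dg D)) = map (dcol D') (goutG (dg D'))"
  shows "dec_iso D D'"
proof -
  define \<alpha> where "\<alpha> = inv_into (gV (dg D')) (dvt D') \<circ> dvt D"
  define \<beta> where "\<beta> = inv_into (gE (dg D')) (dcol D') \<circ> dcol D"
  have wfD: "wf_graph (dg D)" using decD[OF dec] by blast
  have wfD': "wf_graph (dg D')" using decD[OF dec'] by blast
  have ba: "bij_betw \<alpha> (gV (dg D)) (gV (dg D'))"
    unfolding \<alpha>_def
    using bij_betw_trans[OF inj_on_imp_bij_betw[OF i2], of _ "gV (dg D')"] bij_betw_inv_into[OF inj_on_imp_bij_betw[OF i2']] V
    by metis
  have bb: "bij_betw \<beta> (gE (dg D)) (gE (dg D'))"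
    unfolding \<beta>_def
    using bij_betw_trans[OF inj_on_imp_bij_betw[OF i1], of _ "gE (dg D')"] bij_betw_inv_into[OF inj_on_imp_bij_betw[OF i1']] E
    by metis
  have av: "\<And>u. u \<in> gV (dg D) \<Longrightarrow> dvt D' (\<alpha> u) = dvt D u"
    unfolding \<alpha>_def using V by (metis comp_apply f_inv_into_f image_eqI)
  have bv: "\<And>b. b \<in> gE (dg D) \<Longrightarrow> dcol D' (\<beta> b) = dcol D b"
    unfolding \<beta>_def using E by (metis comp_apply f_inv_into_f image_eqI)
  have bE: "\<And>b. b \<in> gE (dg D) \<Longrightarrow> \<beta> b \<in> gE (dg D')" using bb by (auto dest: bij_betwE)
  have aV: "\<And>u. u \<in> gV (dg D) \<Longrightarrow> \<alpha> u \<in> gV (dg D')" using ba by (auto dest: bij_betwE)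
  have mapb: "\<And>xs. set xs \<subseteq> gE (dg D) \<Longrightarrow> map (dcol D') (map \<beta> xs) = map (dcol D) xs"
    using bv by (auto simp: subset_iff)
  have mapbs: "\<And>xs. set xs \<subseteq> gE (dg D) \<Longrightarrow> set (map \<beta> xs) \<subseteq> gE (dg D')"
    using bE by auto
  have vert: "\<forall>v\<in>gV (dg D). gin (dg D') (\<alpha> v) = map \<beta> (gin (dg D) v) \<and> gout (dg D') (\<alpha> v) = map \<beta> (gout (dg D) v)"
  proof
    fix v assume v: "v \<in> gV (dg D)"
    have v': "\<alpha> v \<in> gV (dg D')" using aV v .
    have s: "set (gin (dg D) v) \<subseteq> gE (dg D)" "set (gout (dg D) v) \<subseteq> gE (dg D)" using wfD_v[OF wfD v] by auto
    have s': "set (gin (dg D') (\<alpha> v)) \<subseteq> gE (dg D')" "set (gout (dg D') (\<alpha> v)) \<subseteq> gE (dg D')" using wfD_v[OF wfD' v'] by auto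
    have "map (dcol D') (gin (dg D') (\<alpha> v)) = map (dcol D') (map \<beta> (gin (dg D) v))"
      using decD(3)[OF dec' v'] decD(3)[OF dec v] av[OF v] mapb[OF s(1)] by simp
    moreover have "map (dcol D') (gout (dg D') (\<alpha> v)) = map (dcol D') (map \<beta> (gout (dg D) v))"
      using decD(3)[OF dec' v'] decD(3)[OF dec v] av[OF v] mapb[OF s(2)] by simp
    ultimately show "gin (dg D') (\<alpha> v) = map \<beta> (gin (dg D) v) \<and> gout (dg D') (\<alpha> v) = map \<beta> (gout (dg D) v)"
      using map_eq_inj[OF i1'] s' mapbs[OF s(1)] mapbs[OF s(2)] by blast
  qed
  have sg: "set (ginG (dg D)) \<subseteq> gE (dg D)" "set (goutG (dg D)) \<subseteq> gE (dg D)" using wfD_g[OF wfD] by auto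
  have sg': "set (ginG (dg D')) \<subseteq> gE (dg D')" "set (goutG (dg D')) \<subseteq> gE (dg D')" using wfD_g[OF wfD'] by auto
  have "ginG (dg D') = map \<beta> (ginG (dg D))"
    using map_eq_inj[OF i1' sg'(1) mapbs[OF sg(1)]] mapb[OF sg(1)] ein by simp
  moreover have "goutG (dg D') = map \<beta> (goutG (dg D))"
    using map_eq_inj[OF i1' sg'(2) mapbs[OF sg(2)]] mapb[OF sg(2)] eout by simp
  ultimately have "graph_iso (dg D) (dg D') \<alpha> \<beta>"
    unfolding graph_iso_def using ba bb vert by blast
  then show ?thesis unfolding dec_iso_def using av bv by blast
qed

theorem mainTheorem2:
  fixes G :: "('vG, 'eG) graph" and H :: "('vH, 'eH) graph"
    and f0 f0' :: "'eH \<Rightarrow> 'eG"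
    and f1 :: "'vH \<Rightarrow> ('a, 'b, 'vG, 'eG) decgraph"
    and f1' :: "'vH \<Rightarrow> ('c, 'd, 'vG, 'eG) decgraph"
  assumes "wf_graph G" and "wf_graph H"
    and "properad_morphism H G f0 f1"
    and "properad_morphism H G f0' f1'"
    and "is_subgraph G (image_dg H f0 f1)"
    and "is_subgraph G (image_dg H f0' f1')"
    and "\<forall>e\<in>gE H. f0 e = f0' e"
  shows "\<forall>v\<in>gV H. dec_iso (f1 v) (f1' v)"
proof
  fix v assume v: "v \<in> gV H"
  have A: "inj_on (dcol (f1 v)) (gE (dg (f1 v))) \<and> inj_on (dvt (f1 v)) (gV (dg (f1 v)))"
    using image_inj[OF assms(2,3) conjunct1[OF subgraph_inj[OF assms(5)]] conjunct2[OF subgraph_inj[OF assms(5)]] v] .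
  have A': "inj_on (dcol (f1' v)) (gE (dg (f1' v))) \<and> inj_on (dvt (f1' v)) (gV (dg (f1' v)))"
    using image_inj[OF assms(2,4) conjunct1[OF subgraph_inj[OF assms(6)]] conjunct2[OF subgraph_inj[OF assms(6)]] v] .
  have g: "gamma_op G (map f0 (gin H v)) (map f0 (gout H v)) (f1 v)"
    using assms(3) v unfolding properad_morphism_def by blast
  have g': "gamma_op G (map f0' (gin H v)) (map f0' (gout H v)) (f1' v)"
    using assms(4) v unfolding properad_morphism_def by blast
  have eqs: "map f0 (gin H v) = map f0' (gin H v)" "map f0 (gout H v) = map f0' (gout H v)"
    using assms(7) wfD_v[OF assms(2) v] by (auto simp: subset_iff)
  have dec: "decorated G (f1 v)" and dec': "decorated G (f1' v)" using g g' unfolding gamma_op_def by blast+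
  have ein: "map (dcol (f1 v)) (ginG (dg (f1 v))) = map (dcol (f1' v)) (ginG (dg (f1' v)))"
    and eout: "map (dcol (f1 v)) (goutG (dg (f1 v))) = map (dcol (f1' v)) (goutG (dg (f1' v)))"
    using g g' eqs unfolding gamma_op_def by auto
  note c1 = D_cover[OF assms(1) dec dec' conjunct1[OF A] ein eout]
  note c2 = D_cover[OF assms(1) dec' dec conjunct1[OF A'] ein[symmetric] eout[symmetric]]
  have VV: "dvt (f1 v) ` gV (dg (f1 v)) = dvt (f1' v) ` gV (dg (f1' v))"
    using conjunct1[OF c1] conjunct1[OF c2] by (rule subset_antisym)
  have EE: "dcol (f1 v) ` gE (dg (f1 v)) = dcol (f1' v) ` gE (dg (f1' v))"
    using conjunct2[OF c1] conjunct2[OF c2] by (rule subset_antisym)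
  show "dec_iso (f1 v) (f1' v)"
    using mk_iso[OF dec dec' conjunct1[OF A] conjunct2[OF A] conjunct1[OF A'] conjunct2[OF A'] VV EE ein eout] .
qed


end
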